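(* In the setting of the context, assume $\sup_{m\ge1,\,0\le i\le\pi_m-1}\eta_{m,i}<\infty$. Then for every $j\ge1$ the sequence $(P_j(\{r\}))_{r\ge0}$ converges to $0$ exponentially fast as $r\to\infty$.
   Context: Let $\pi_m\ge2$ ($m\ge1$) be integers and $\eta_{m,i}\ge0$ ($m\ge1$, $0\le i\le\pi_m-1$) integers. $\overline Y=\prod_{m\ge1}\{0,\dots,\pi_m-1\}$ with product uniform measure $\overline\nu$ and odometer $\overline S$ (add $1$ to the first coordinate with carry to the right). $\gamma(\overline y)=\sum_{m=1}^{\overline t(\overline y)}\eta_{m,\overline y_m}$ where $\overline t(\overline y)$ is the smallest $t\ge1$ with $\overline y_t<\pi_t-1$. $P_j$ is the distribution under $\overline\nu$ of $\gamma+\gamma\circ\overline S+\dots+\gamma\circ\overline S^{j-1}$ (a probability on $\{0,1,2,\dots\}$). *)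

theory Defs
  imports "HOL-Probability.Probability"
begin

text \<open>Coordinates are indexed from 0 (coordinate m here corresponds to m+1 in the paper).\<close>

definition odo_space :: "(nat \<Rightarrow> nat) \<Rightarrow> (nat \<Rightarrow> nat) measure" where
  "odo_space \<pi> = (\<Pi>\<^sub>M m\<in>UNIV. measure_pmf (pmf_of_set {..<\<pi> m}))"

definition odometer :: "(nat \<Rightarrow> nat) \<Rightarrow> (nat \<Rightarrow> nat) \<Rightarrow> (nat \<Rightarrow> nat)" where
  "odometer \<pi> y = (\<lambda>m. if (\<forall>k<m. y k = \<pi> k - 1)
                         then (if y m = \<pi> m - 1 then 0 else y m + 1) else y m)"

definition odo_t :: "(nat \<Rightarrow> nat) \<Rightarrow> (nat \<Rightarrow> nat) \<Rightarrow> nat" where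
  "odo_t \<pi> y = (LEAST t. y t < \<pi> t - 1)"

definition odo_gamma :: "(nat \<Rightarrow> nat) \<Rightarrow> (nat \<Rightarrow> nat \<Rightarrow> nat) \<Rightarrow> (nat \<Rightarrow> nat) \<Rightarrow> nat" where
  "odo_gamma \<pi> \<eta> y = (\<Sum>m\<le>odo_t \<pi> y. \<eta> m (y m))"

definition odo_P :: "(nat \<Rightarrow> nat) \<Rightarrow> (nat \<Rightarrow> nat \<Rightarrow> nat) \<Rightarrow> nat \<Rightarrow> nat \<Rightarrow> real" where
  "odo_P \<pi> \<eta> j r = measure (odo_space \<pi>)
     {y \<in> space (odo_space \<pi>). (\<Sum>k<j. odo_gamma \<pi> \<eta> ((odometer \<pi> ^^ k) y)) = r}"

end

theory Submission
  imports Defs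
begin

definition NN :: "(nat \<Rightarrow> nat) \<Rightarrow> nat \<Rightarrow> nat" where "NN \<pi> n = (\<Prod>i<n. \<pi> i)"
definition vv :: "(nat \<Rightarrow> nat) \<Rightarrow> nat \<Rightarrow> (nat \<Rightarrow> nat) \<Rightarrow> nat" where
  "vv \<pi> n y = (\<Sum>m<n. y m * NN \<pi> m)"

lemma NN_Suc: "NN \<pi> (Suc n) = NN \<pi> n * \<pi> n" by (simp add: NN_def)
lemma vv_Suc: "vv \<pi> (Suc n) y = vv \<pi> n y + y n * NN \<pi> n" by (simp add: vv_def)

lemma NN_pos: "(\<And>m. \<pi> m \<ge> 2) \<Longrightarrow> NN \<pi> n > 0"
  unfolding NN_def by (intro prod_pos) (auto intro: less_le_trans[of 0 2])

lemma NN_ge: "(\<And>m. \<pi> m \<ge> 2) \<Longrightarrow> NN \<pi> n \<ge> (2::nat) ^ n"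
proof (induction n)
  case 0 then show ?case by (simp add: NN_def)
next
  case (Suc n)
  have "(2::nat) ^ Suc n = 2^n * 2" by simp
  also have "\<dots> \<le> NN \<pi> n * \<pi> n" using Suc by (intro mult_mono) auto
  finally show ?case by (simp add: NN_Suc)
qed

lemma NN_mono: "(\<And>m. \<pi> m \<ge> 2) \<Longrightarrow> L \<le> n \<Longrightarrow> NN \<pi> L \<le> NN \<pi> n"
proof (induction n)
  case 0 then show ?case by simp
next
  case (Suc n)
  show ?case
  proof (cases "L = Suc n")
    case False
    then have "NN \<pi> L \<le> NN \<pi> n" using Suc by auto
    also have "\<dots> \<le> NN \<pi> n * \<pi> n" using Suc.prems(1)[of n] by simp
    finally show ?thesis by (simp add: NN_Suc)
  qed simp
qed

lemma vv_less: "(\<And>m. \<pi> m \<ge> 2) \<Longrightarrow> \<forall>m<n. y m < \<pi> m \<Longrightarrow> vv \<pi> n y < NN \<pi> n"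
proof (induction n)
  case 0 then show ?case by (simp add: vv_def NN_def)
next
  case (Suc n)
  have a: "vv \<pi> n y + 1 \<le> NN \<pi> n" using Suc by auto
  have b: "y n + 1 \<le> \<pi> n" using Suc.prems by auto
  have "vv \<pi> n y + y n * NN \<pi> n + 1 \<le> NN \<pi> n + y n * NN \<pi> n" using a by simp
  also have "\<dots> = (y n + 1) * NN \<pi> n" by simp
  also have "\<dots> \<le> \<pi> n * NN \<pi> n" using b by (intro mult_right_mono) auto
  finally show ?case by (simp add: vv_Suc NN_Suc mult.commute)
qed

lemma vv_max: "(\<And>m. \<pi> m \<ge> 2) \<Longrightarrow> \<forall>m<n. y m = \<pi> m - 1 \<Longrightarrow> vv \<pi> n y + 1 = NN \<pi> n"
proof (induction n)
  case 0 then show ?case by (simp add: vv_def NN_def)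
next
  case (Suc n)
  have a: "vv \<pi> n y + 1 = NN \<pi> n" using Suc by auto
  have b: "y n + 1 = \<pi> n" using Suc.prems(2) Suc.prems(1)[of n] by auto
  have "vv \<pi> n y + y n * NN \<pi> n + 1 = (y n + 1) * NN \<pi> n" using a by simp
  also have "\<dots> = NN \<pi> n * \<pi> n" using b by simp
  finally show ?case by (simp add: vv_Suc NN_Suc)
qed

lemma vv_top: "(\<And>m. \<pi> m \<ge> 2) \<Longrightarrow> \<forall>m<n. y m < \<pi> m \<Longrightarrow> vv \<pi> n y + NN \<pi> L \<ge> NN \<pi> n
   \<Longrightarrow> L \<le> m \<Longrightarrow> m < n \<Longrightarrow> y m = \<pi> m - 1"
proof (induction n arbitrary: m)
  case 0 then show ?case by simp
next
  case (Suc n)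
  have Ln: "L \<le> n" using Suc.prems by auto
  have NL: "NN \<pi> L \<le> NN \<pi> n" using NN_mono[OF Suc.prems(1) Ln] .
  have vl: "vv \<pi> n y < NN \<pi> n" using vv_less[of \<pi> n y] Suc.prems by auto
  have yn: "y n < \<pi> n" using Suc.prems by auto
  have h: "vv \<pi> n y + y n * NN \<pi> n + NN \<pi> L \<ge> NN \<pi> n * \<pi> n"
    using Suc.prems(3) by (simp add: vv_Suc NN_Suc)
  have ynm: "y n = \<pi> n - 1"
  proof (rule ccontr)
    assume "y n \<noteq> \<pi> n - 1"
    then have "y n + 2 \<le> \<pi> n" using yn by auto
    then have "(y n + 2) * NN \<pi> n \<le> \<pi> n * NN \<pi> n" by (intro mult_right_mono) auto
    then show False using h vl NL by (simp add: algebra_simps)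
  qed
  have "vv \<pi> n y + NN \<pi> L \<ge> NN \<pi> n"
  proof -
    have "\<pi> n = y n + 1" using ynm Suc.prems(1)[of n] by auto
    then have "NN \<pi> n * \<pi> n = y n * NN \<pi> n + NN \<pi> n" by (simp add: algebra_simps)
    then show ?thesis using h by linarith
  qed
  then show ?case using Suc ynm by (cases "m = n") auto
qed


lemma odo_good: "(\<And>m. \<pi> m \<ge> 2) \<Longrightarrow> \<forall>m. y m < \<pi> m \<Longrightarrow> \<forall>m. odometer \<pi> y m < \<pi> m"
proof
  fix m assume p: "\<And>m. \<pi> m \<ge> 2" and y: "\<forall>m. y m < \<pi> m"
  have "\<pi> m \<ge> 2" "y m < \<pi> m" using p y by auto
  then show "odometer \<pi> y m < \<pi> m" unfolding odometer_def by auto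
qed

lemma odo_iter_good: "(\<And>m. \<pi> m \<ge> 2) \<Longrightarrow> \<forall>m. y m < \<pi> m \<Longrightarrow> \<forall>m. (odometer \<pi> ^^ k) y m < \<pi> m"
  by (induction k) (auto intro: odo_good[rule_format])

lemma carry_iff: "(\<And>m. \<pi> m \<ge> 2) \<Longrightarrow> \<forall>m. y m < \<pi> m \<Longrightarrow>
   (\<forall>k<n. y k = \<pi> k - 1) \<longleftrightarrow> vv \<pi> n y + 1 = NN \<pi> n"
proof
  assume p: "\<And>m. \<pi> m \<ge> 2" and y: "\<forall>m. y m < \<pi> m"
  { assume "\<forall>k<n. y k = \<pi> k - 1" then show "vv \<pi> n y + 1 = NN \<pi> n" using vv_max p by blast }
  { assume "vv \<pi> n y + 1 = NN \<pi> n"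
    then show "\<forall>k<n. y k = \<pi> k - 1"
      using vv_top[of \<pi> n y 0] p y by (auto simp: NN_def) }
qed

lemma vv_odo: assumes p: "\<And>m. \<pi> m \<ge> 2" and y: "\<forall>m. y m < \<pi> m"
  shows "vv \<pi> n (odometer \<pi> y) = (vv \<pi> n y + 1) mod NN \<pi> n"
proof (induction n)
  case 0 then show ?case by (simp add: vv_def NN_def)
next
  case (Suc n)
  have vl: "vv \<pi> n y < NN \<pi> n" using vv_less[of \<pi> n y] p y by auto
  have yn: "y n < \<pi> n" "\<pi> n \<ge> 2" using y p by auto
  have Np: "NN \<pi> n > 0" using NN_pos p by blast
  show ?case
  proof (cases "vv \<pi> n y + 1 = NN \<pi> n")
    case True
    then have c: "\<forall>k<n. y k = \<pi> k - 1" using carry_iff[OF p y] by blast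
    have o: "odometer \<pi> y n = (y n + 1) mod \<pi> n"
      using c yn unfolding odometer_def by (auto simp: mod_if)
    have "vv \<pi> (Suc n) (odometer \<pi> y) = ((y n + 1) mod \<pi> n) * NN \<pi> n"
      using Suc True o by (simp add: vv_Suc)
    also have "\<dots> = ((y n + 1) * NN \<pi> n) mod (\<pi> n * NN \<pi> n)"
      by (simp add: mult_mod_left)
    also have "(y n + 1) * NN \<pi> n = vv \<pi> (Suc n) y + 1" using True by (simp add: vv_Suc)
    finally show ?thesis by (simp add: NN_Suc mult.commute)
  next
    case False
    then have lt: "vv \<pi> n y + 1 < NN \<pi> n" using vl by simp
    have c: "\<not> (\<forall>k<n. y k = \<pi> k - 1)" using carry_iff[OF p y] False by blast
    have o: "odometer \<pi> y n = y n" using c unfolding odometer_def by auto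
    have "vv \<pi> (Suc n) (odometer \<pi> y) = vv \<pi> n y + 1 + y n * NN \<pi> n"
      using Suc lt o by (simp add: vv_Suc)
    also have "\<dots> = (vv \<pi> n y + 1 + y n * NN \<pi> n) mod (NN \<pi> n * \<pi> n)"
    proof (rule mod_less[symmetric])
      have "y n + 1 \<le> \<pi> n" using yn by simp
      then have "(y n + 1) * NN \<pi> n \<le> \<pi> n * NN \<pi> n" by (intro mult_right_mono) auto
      then show "vv \<pi> n y + 1 + y n * NN \<pi> n < NN \<pi> n * \<pi> n" using lt by (simp add: algebra_simps)
    qed
    finally show ?thesis by (simp add: vv_Suc NN_Suc)
  qed
qed

lemma vv_iter: assumes p: "\<And>m. \<pi> m \<ge> 2" and y: "\<forall>m. y m < \<pi> m"
  shows "vv \<pi> n ((odometer \<pi> ^^ k) y) = (vv \<pi> n y + k) mod NN \<pi> n"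
proof (induction k)
  case 0 then show ?case using vv_less[of \<pi> n y] p y by simp
next
  case (Suc k)
  have "vv \<pi> n ((odometer \<pi> ^^ Suc k) y) = (vv \<pi> n ((odometer \<pi> ^^ k) y) + 1) mod NN \<pi> n"
    using vv_odo[OF p odo_iter_good[OF p y]] by simp
  also have "\<dots> = (vv \<pi> n y + Suc k) mod NN \<pi> n" using Suc by (simp add: mod_Suc_eq)
  finally show ?case .
qed


lemma gamma_bound:
  assumes p: "\<And>m. \<pi> m \<ge> 2" and B: "\<forall>m i. i < \<pi> m \<longrightarrow> \<eta> m i \<le> B"
    and z: "\<forall>m. z m < \<pi> m" and t: "t < n" "z t < \<pi> t - 1"
  shows "odo_gamma \<pi> \<eta> z \<le> n * B"
proof -
  have le: "odo_t \<pi> z \<le> t" unfolding odo_t_def using t by (intro Least_le) auto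
  have "odo_gamma \<pi> \<eta> z \<le> (\<Sum>m\<le>odo_t \<pi> z. B)"
    unfolding odo_gamma_def using B z by (intro sum_mono) auto
  also have "\<dots> = (odo_t \<pi> z + 1) * B" by simp
  also have "\<dots> \<le> n * B" using le t by (intro mult_right_mono) auto
  finally show ?thesis .
qed

lemma key_incl:
  assumes p: "\<And>m. \<pi> m \<ge> 2" and B: "\<forall>m i. i < \<pi> m \<longrightarrow> \<eta> m i \<le> B"
    and jn: "j \<le> n" and r: "j * n * B < r" and y: "\<forall>m. y m < \<pi> m"
    and s: "(\<Sum>k<j. odo_gamma \<pi> \<eta> ((odometer \<pi> ^^ k) y)) = r"
  shows "\<forall>m. j \<le> m \<and> m < n \<longrightarrow> y m = \<pi> m - 1"
proof -
  have "\<exists>k<j. \<forall>t<n. \<not> ((odometer \<pi> ^^ k) y t < \<pi> t - 1)"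
  proof (rule ccontr)
    assume "\<not> ?thesis"
    then have h: "\<forall>k<j. \<exists>t<n. (odometer \<pi> ^^ k) y t < \<pi> t - 1" by blast
    have "(\<Sum>k<j. odo_gamma \<pi> \<eta> ((odometer \<pi> ^^ k) y)) \<le> (\<Sum>k<j. n * B)"
    proof (intro sum_mono)
      fix k assume "k \<in> {..<j}"
      then obtain t where "t < n" "(odometer \<pi> ^^ k) y t < \<pi> t - 1" using h by auto
      then show "odo_gamma \<pi> \<eta> ((odometer \<pi> ^^ k) y) \<le> n * B"
        using gamma_bound[OF p B odo_iter_good[OF p y]] by blast
    qed
    then show False using s r by (simp add: mult.assoc)
  qed
  then obtain k where k: "k < j" "\<forall>t<n. \<not> ((odometer \<pi> ^^ k) y t < \<pi> t - 1)" by blast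
  let ?z = "(odometer \<pi> ^^ k) y"
  have zg: "\<forall>m. ?z m < \<pi> m" using odo_iter_good[OF p y] .
  have "\<forall>t<n. ?z t = \<pi> t - 1" using k(2) zg by (metis Suc_pred' less_Suc_eq not_gr_zero not_less0)
  then have "vv \<pi> n ?z + 1 = NN \<pi> n" using vv_max p by blast
  then have eq: "(vv \<pi> n y + k) mod NN \<pi> n + 1 = NN \<pi> n" using vv_iter[OF p y] by simp
  have vl: "vv \<pi> n y < NN \<pi> n" using vv_less[of \<pi> n y] p y by auto
  have jN: "j \<le> NN \<pi> j"
  proof -
    have "j < 2 ^ j" by (rule less_exp)
    moreover have "(2::nat) ^ j \<le> NN \<pi> j" using NN_ge[of \<pi> j] p by blast
    ultimately show ?thesis by linarith
  qed
  have NjN: "NN \<pi> j \<le> NN \<pi> n" using NN_mono[OF p jn] .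
  have "vv \<pi> n y + k + 1 = NN \<pi> n"
  proof (cases "vv \<pi> n y + k < NN \<pi> n")
    case True then show ?thesis using eq by simp
  next
    case False
    then have "(vv \<pi> n y + k) mod NN \<pi> n = vv \<pi> n y + k - NN \<pi> n"
      using k(1) jN NjN vl by (simp add: mod_if le_mod_geq)
    then show ?thesis using eq k(1) jN NjN vl by linarith
  qed
  then have "vv \<pi> n y + NN \<pi> j \<ge> NN \<pi> n" using k(1) jN by linarith
  then show ?thesis using vv_top[of \<pi> n y j] p y by blast
qed


lemma meas_bound:
  assumes p: "\<And>m. \<pi> m \<ge> 2" and B: "\<forall>m i. i < \<pi> m \<longrightarrow> \<eta> m i \<le> B"
    and jn: "j \<le> n" and r: "j * n * B < r"
  shows "odo_P \<pi> \<eta> j r \<le> (1/2) ^ (n - j)"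
proof -
  define Mi where "Mi = (\<lambda>m. measure_pmf (pmf_of_set {..<\<pi> m}))"
  interpret product_prob_space Mi UNIV
    unfolding Mi_def by unfold_locales
  have Mdef: "odo_space \<pi> = PiM UNIV Mi" unfolding odo_space_def Mi_def by simp
  let ?M = "PiM UNIV Mi"
  have ne: "{..<\<pi> m} \<noteq> {}" for m using p[of m] by (auto simp: lessThan_empty_iff)
  define Bad where "Bad = (\<Union>m. {y\<in>space ?M. y m \<in> {\<pi> m..}})"
  define Cyl where "Cyl = {y\<in>space ?M. \<forall>m\<in>{j..<n}. y m \<in> {\<pi> m - 1}}"
  have single: "{y\<in>space ?M. y m \<in> A} \<in> sets ?M" for m A
  proof -
    have "{y\<in>space ?M. y m \<in> A} = (\<lambda>y. y m) -` A \<inter> space ?M" by auto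
    also have "\<dots> \<in> sets ?M"
      by (rule measurable_sets[OF measurable_component_singleton]) (auto simp: Mi_def)
    finally show ?thesis .
  qed
  have Bad_sets: "Bad \<in> sets ?M" unfolding Bad_def
    by (rule sets.countable_UN) (use single in blast)
  have "emeasure ?M Bad = 0" unfolding Bad_def
  proof (rule emeasure_UN_eq_0)
    fix m
    have "emeasure ?M {y\<in>space ?M. y m \<in> {\<pi> m..}} = emeasure (Mi m) {\<pi> m..}"
      by (rule emeasure_PiM_Collect_single) (auto simp: Mi_def)
    also have "\<dots> = 0" unfolding Mi_def using ne[of m]
      by (subst emeasure_pmf_of_set) auto
    finally show "emeasure ?M {y\<in>space ?M. y m \<in> {\<pi> m..}} = 0" .
  qed (use single in blast)
  then have Bad0: "measure ?M Bad = 0" by (simp add: measure_def)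
  have Cyl_sets: "Cyl \<in> sets ?M"
    unfolding Cyl_def by (rule sets.sets_Collect_finite_All) (use single in blast)+
  have "emeasure ?M Cyl = (\<Prod>m\<in>{j..<n}. emeasure (Mi m) {\<pi> m - 1})"
    unfolding Cyl_def by (rule emeasure_PiM_Collect) (auto simp: Mi_def)
  also have "\<dots> = (\<Prod>m\<in>{j..<n}. ennreal (1 / \<pi> m))"
  proof (intro prod.cong refl)
    fix m
    have "measure (Mi m) {\<pi> m - 1} = 1 / \<pi> m"
      unfolding Mi_def using ne[of m] p[of m] by (subst measure_pmf_of_set) auto
    then show "emeasure (Mi m) {\<pi> m - 1} = ennreal (1 / \<pi> m)"
      by (simp add: Mi_def measure_pmf.emeasure_eq_measure)
  qed
  also have "\<dots> = ennreal (\<Prod>m\<in>{j..<n}. 1 / \<pi> m)" by (simp add: prod_ennreal)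
  finally have "measure ?M Cyl = (\<Prod>m\<in>{j..<n}. 1 / real (\<pi> m))"
    by (simp add: measure_def prod_nonneg)
  also have "\<dots> \<le> (\<Prod>m\<in>{j..<n}. 1 / 2)"
  proof (intro prod_mono conjI)
    fix m show "0 \<le> 1 / real (\<pi> m)" by simp
    show "1 / real (\<pi> m) \<le> 1 / 2" using p[of m] by (simp add: divide_simps)
  qed
  also have "\<dots> = (1/2) ^ (n - j)" by simp
  finally have Cylb: "measure ?M Cyl \<le> (1/2) ^ (n - j)" .
  have sub: "{y \<in> space (odo_space \<pi>). (\<Sum>k<j. odo_gamma \<pi> \<eta> ((odometer \<pi> ^^ k) y)) = r}
        \<subseteq> Bad \<union> Cyl"
  proof
    fix y assume y: "y \<in> {y \<in> space (odo_space \<pi>). (\<Sum>k<j. odo_gamma \<pi> \<eta> ((odometer \<pi> ^^ k) y)) = r}"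
    have sp: "y \<in> space ?M" using y Mdef by simp
    show "y \<in> Bad \<union> Cyl"
    proof (cases "\<forall>m. y m < \<pi> m")
      case True
      then have "\<forall>m. j \<le> m \<and> m < n \<longrightarrow> y m = \<pi> m - 1"
        using key_incl[OF p B jn r True] y by blast
      then show ?thesis using sp unfolding Cyl_def by auto
    next
      case False
      then show ?thesis using sp unfolding Bad_def by (auto simp: not_less)
    qed
  qed
  have "odo_P \<pi> \<eta> j r \<le> measure ?M (Bad \<union> Cyl)"
    unfolding odo_P_def Mdef
    by (rule finite_measure_mono) (use sub Bad_sets Cyl_sets Mdef in auto)
  also have "\<dots> \<le> measure ?M Bad + measure ?M Cyl"
    using Bad_sets Cyl_sets by (rule measure_Un_le)
  also have "\<dots> \<le> (1/2) ^ (n - j)" using Bad0 Cylb by simp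
  finally show ?thesis .
qed


lemma qpow: assumes D: "(D::nat) > 0"
  shows "(1/2::real) ^ (r div D + 1) \<le> (2 powr (-1 / real D)) ^ r"
proof -
  have "(2 powr (-1 / real D)) ^ r = (2 powr (-1 / real D)) powr real r"
    by (simp add: powr_realpow)
  also have "\<dots> = 2 powr (- (real r / real D))" by (simp add: powr_powr)
  finally have e1: "(2 powr (-1 / real D)) ^ r = 2 powr (- (real r / real D))" .
  have pr: "(2::real) powr real (r div D + 1) = 2 ^ (r div D + 1)" by (rule powr_realpow) simp
  have "(1/2::real) ^ (r div D + 1) = inverse (2 powr real (r div D + 1))"
    unfolding pr by (simp add: power_one_over inverse_eq_divide)
  also have "\<dots> = 2 powr (- real (r div D + 1))" by (rule powr_minus[symmetric])
  finally have e2: "(1/2::real) ^ (r div D + 1) = 2 powr (- real (r div D + 1))" .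
  have "r < (r div D + 1) * D" using D
    by (metis add.commute div_mult_mod_eq mod_less_divisor mult.commute mult_Suc nat_add_left_cancel_less plus_1_eq_Suc)
  then have "real r < real (r div D + 1) * real D" by (metis of_nat_less_iff of_nat_mult)
  then have "real r / real D \<le> real (r div D + 1)" using D by (simp add: divide_simps)
  then have "2 powr (- real (r div D + 1)) \<le> 2 powr (- (real r / real D))"
    by (intro powr_mono) auto
  then show ?thesis using e1 e2 by simp
qed

theorem mainTheorem18:
  fixes \<pi> :: "nat \<Rightarrow> nat" and \<eta> :: "nat \<Rightarrow> nat \<Rightarrow> nat"
  assumes "\<And>m. \<pi> m \<ge> 2"
    and "\<exists>B. \<forall>m i. i < \<pi> m \<longrightarrow> \<eta> m i \<le> B"
    and "j \<ge> 1"
  shows "\<exists>C q. 0 < q \<and> q < 1 \<and> (\<forall>r. odo_P \<pi> \<eta> j r \<le> C * q ^ r)"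
proof -
  note p = assms(1)
  obtain B where B: "\<forall>m i. i < \<pi> m \<longrightarrow> \<eta> m i \<le> B" using assms(2) by blast
  define D where "D = j * B + 1"
  have D: "D > 0" unfolding D_def by simp
  define q :: real where "q = 2 powr (-1 / real D)"
  have q0: "0 < q" unfolding q_def by simp
  have q1: "q < 1" unfolding q_def using D by (intro powr_less_one) auto
  have ps: "prob_space (odo_space \<pi>)" unfolding odo_space_def
    by (intro prob_space_PiM) (simp add: prob_space_measure_pmf)
  have "odo_P \<pi> \<eta> j r \<le> 2 ^ (j+1) * q ^ r" for r
  proof -
    define n where "n = r div D"
    have qr: "(1/2::real) ^ (n + 1) \<le> q ^ r" unfolding n_def q_def using qpow[OF D] .
    have "odo_P \<pi> \<eta> j r \<le> 2 ^ (j+1) * (1/2) ^ (n+1)"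
    proof (cases "j \<le> n")
      case True
      have nD: "n * D \<le> r" unfolding n_def by (simp add: div_times_less_eq_dividend)
      have "j * n * B < n * D" using True assms(3) unfolding D_def by (simp add: algebra_simps)
      then have r: "j * n * B < r" using nD by linarith
      have "odo_P \<pi> \<eta> j r \<le> (1/2) ^ (n - j)" by (rule meas_bound[OF p B True r])
      also have "(1/2::real) ^ (n - j) = 2 ^ (j+1) * (1/2) ^ (n+1)"
      proof -
        have "n + 1 = (n - j) + (j + 1)" using True by simp
        then have "(1/2::real) ^ (n+1) = (1/2) ^ (n - j) * (1/2) ^ (j+1)" by (metis power_add)
        then show ?thesis by (simp add: power_one_over)
      qed
      finally show ?thesis .
    next
      case False
      have "odo_P \<pi> \<eta> j r \<le> 1" unfolding odo_P_def using prob_space.prob_le_1[OF ps] by blast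
      also have "(1::real) = 2 ^ (j+1) * (1/2) ^ (j+1)" by (simp add: power_one_over)
      also have "\<dots> \<le> 2 ^ (j+1) * (1/2) ^ (n+1)" using False by (intro mult_left_mono power_decreasing) auto
      finally show ?thesis .
    qed
    also have "\<dots> \<le> 2 ^ (j+1) * q ^ r" using qr by simp
    finally show ?thesis .
  qed
  then show ?thesis using q0 q1 by blast
qed

end
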